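(* Let $A=(a_{ij})$ and $B=(b_{ij})$ be two $n\times n$ generalized tournament matrices with the same principal minors of orders $2$ and $3$. For all pairwise distinct $i,j,k\in[n]$: (i) if $\{i,j\}\in P_{\neq}$ and $\{i,k\},\{j,k\}\in P_{=}$, then $a_{ik}=a_{jk}=b_{ik}=b_{jk}$; (ii) if $\{i,j\}\in P_{=}$ and $\{i,k\},\{j,k\}\in P_{\neq}$, then $a_{ik}=a_{jk}=1-b_{ik}=1-b_{jk}$; (iii) if $\{i,j\}\in P_{=}$ and $\{i,k\},\{j,k\}\notin P_{=}$, then $a_{ik}=1/2$ if and only if $a_{jk}=1/2$; (iv) if $\{i,j\}\in P_{\neq}$ and $\{i,k\},\{j,k\}\notin P_{\neq}$, then $a_{ik}=1/2$ if and only if $a_{jk}=1/2$.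
   Context: A generalized tournament matrix of order $n$ is a real $n\times n$ matrix $M=(m_{ij})$ with nonnegative entries satisfying $M+M^{t}=J_n-I_n$ ($J_n$ the all-ones matrix, $I_n$ the identity). Write $[n]=\{1,\ldots,n\}$. When $A$ and $B$ have the same principal minors of order $2$, for all $i\neq j$ one has $a_{ij}=b_{ij}$ or $a_{ij}=1-b_{ij}$, and the set of $2$-subsets of $[n]$ is partitioned into $P_{=}=\{\{i,j\}: a_{ij}=b_{ij},\ a_{ij}\neq 1/2\}$, $P_{\neq}=\{\{i,j\}: a_{ij}=1-b_{ij},\ a_{ij}\neq 1/2\}$, and $P_{1/2}=\{\{i,j\}: a_{ij}=b_{ij}=1/2\}$. *)

theory Defs
  imports Jordan_Normal_Form.DL_Submatrix Jordan_Normal_Form.Determinant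
begin

text \<open>Matrices are indexed by 0..n-1 (standing for [n] = 1..n).\<close>

definition gen_tournament :: "nat \<Rightarrow> real mat \<Rightarrow> bool" where
  "gen_tournament n M \<longleftrightarrow> M \<in> carrier_mat n n \<and>
     (\<forall>i<n. \<forall>j<n. M $$ (i,j) \<ge> 0) \<and>
     M + transpose_mat M = mat n n (\<lambda>_. 1) - 1\<^sub>m n"

definition principal_minor :: "real mat \<Rightarrow> nat set \<Rightarrow> real" where
  "principal_minor M S = det (submatrix M S S)"

definition same_principal_minors :: "nat \<Rightarrow> nat \<Rightarrow> real mat \<Rightarrow> real mat \<Rightarrow> bool" where
  "same_principal_minors n k A B \<longleftrightarrow>
     (\<forall>S. S \<subseteq> {0..<n} \<and> card S = k \<longrightarrow> principal_minor A S = principal_minor B S)"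

text \<open>Membership of the 2-subset {i,j} in P_= and P_{\<noteq>} (symmetric in i,j for tournament matrices).\<close>

definition P_eq :: "real mat \<Rightarrow> real mat \<Rightarrow> nat \<Rightarrow> nat \<Rightarrow> bool" where
  "P_eq A B i j \<longleftrightarrow> A $$ (i,j) = B $$ (i,j) \<and> A $$ (i,j) \<noteq> 1/2"

definition P_neq :: "real mat \<Rightarrow> real mat \<Rightarrow> nat \<Rightarrow> nat \<Rightarrow> bool" where
  "P_neq A B i j \<longleftrightarrow> A $$ (i,j) = 1 - B $$ (i,j) \<and> A $$ (i,j) \<noteq> 1/2"

end

theory Submission imports Defs begin
lemma det1:
  assumes M: "(M::real mat) \<in> carrier_mat 1 1" shows "det M = M $$ (0,0)"
proof -
  have md: "mat_delete M 0 0 \<in> carrier_mat 0 0" using mat_delete_carrier[OF M] by simp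
  have "det M = (\<Sum>j<1. M $$ (0,j) * cofactor M 0 j)" by (rule laplace_expansion_row[OF M]) simp
  also have "\<dots> = M $$ (0,0) * cofactor M 0 0" by simp
  also have "cofactor M 0 0 = 1" unfolding cofactor_def det_dim_zero[OF md] by simp
  finally show ?thesis by simp
qed

lemma det2:
  assumes M: "(M::real mat) \<in> carrier_mat 2 2"
  shows "det M = M $$ (0,0) * M $$ (1,1) - M $$ (0,1) * M $$ (1,0)"
proof -
  have md: "mat_delete M 0 j \<in> carrier_mat 1 1" for j using mat_delete_carrier[OF M] by simp
  have ent: "mat_delete M 0 j $$ (0,0) = M $$ (1, if 0 < j then 0 else 1)" for j
    using M unfolding mat_delete_def by auto
  have c0: "cofactor M 0 0 = M $$ (1,1)"
    unfolding cofactor_def det1[OF md] ent by simp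
  have c1: "cofactor M 0 1 = - M $$ (1,0)"
    unfolding cofactor_def det1[OF md] ent by simp
  have "det M = (\<Sum>j<2. M $$ (0,j) * cofactor M 0 j)" by (rule laplace_expansion_row[OF M]) simp
  also have "\<dots> = M $$ (0,0) * cofactor M 0 0 + M $$ (0,1) * cofactor M 0 1"
    by (simp add: eval_nat_numeral)
  also have "\<dots> = M $$ (0,0) * M $$ (1,1) - M $$ (0,1) * M $$ (1,0)"
    unfolding c0 c1 by simp
  finally show ?thesis .
qed

lemma det3:
  assumes M: "(M::real mat) \<in> carrier_mat 3 3"
  shows "det M =
   M $$ (0,0) * (M $$ (1,1) * M $$ (2,2) - M $$ (1,2) * M $$ (2,1))
 - M $$ (0,1) * (M $$ (1,0) * M $$ (2,2) - M $$ (1,2) * M $$ (2,0))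
 + M $$ (0,2) * (M $$ (1,0) * M $$ (2,1) - M $$ (1,1) * M $$ (2,0))"
proof -
  have md: "mat_delete M 0 j \<in> carrier_mat 2 2" for j using mat_delete_carrier[OF M] by simp
  have ent: "mat_delete M 0 j $$ (a,b) = M $$ (Suc a, if b < j then b else Suc b)" if "a<2" "b<2" for j a b
    using M that unfolding mat_delete_def by auto
  have c0: "cofactor M 0 0 = M $$ (1,1) * M $$ (2,2) - M $$ (1,2) * M $$ (2,1)"
    unfolding cofactor_def det2[OF md] by (simp add: ent numeral_2_eq_2)
  have c1: "cofactor M 0 1 = - (M $$ (1,0) * M $$ (2,2) - M $$ (1,2) * M $$ (2,0))"
    unfolding cofactor_def det2[OF md] by (simp add: ent numeral_2_eq_2)
  have c2: "cofactor M 0 2 = M $$ (1,0) * M $$ (2,1) - M $$ (1,1) * M $$ (2,0)"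
    unfolding cofactor_def det2[OF md] by (simp add: ent numeral_2_eq_2)
  have "det M = (\<Sum>j<3. M $$ (0,j) * cofactor M 0 j)" by (rule laplace_expansion_row[OF M]) simp
  also have "\<dots> = M $$ (0,0) * cofactor M 0 0 + M $$ (0,1) * cofactor M 0 1 + M $$ (0,2) * cofactor M 0 2"
    by (simp add: eval_nat_numeral)
  also have "\<dots> = M $$ (0,0) * (M $$ (1,1) * M $$ (2,2) - M $$ (1,2) * M $$ (2,1))
 - M $$ (0,1) * (M $$ (1,0) * M $$ (2,2) - M $$ (1,2) * M $$ (2,0))
 + M $$ (0,2) * (M $$ (1,0) * M $$ (2,1) - M $$ (1,1) * M $$ (2,0))"
    unfolding c0 c1 c2 by (simp add: algebra_simps)
  finally show ?thesis .
qed

lemma sub2: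
  assumes M: "(M::real mat) \<in> carrier_mat n n" and pq: "p < q" "q < n"
  shows "principal_minor M {p,q} = M$$(p,p)*M$$(q,q) - M$$(p,q)*M$$(q,p)"
proof -
  let ?S = "{p,q}"
  have c: "card {x. x < dim_row M \<and> x \<in> ?S} = 2" "card {x. x < dim_col M \<and> x \<in> ?S} = 2"
  proof -
    have "{x. x < dim_row M \<and> x \<in> ?S} = ?S" "{x. x < dim_col M \<and> x \<in> ?S} = ?S" using M pq by auto
    moreover have "card ?S = 2" using pq by simp
    ultimately show "card {x. x < dim_row M \<and> x \<in> ?S} = 2" "card {x. x < dim_col M \<and> x \<in> ?S} = 2"
      by simp_all
  qed
  have p0: "pick ?S 0 = p"
  proof -
    have "{a\<in>?S. a < p} = {}" using pq by auto
    then have e: "card {a\<in>?S. a < p} = 0" by simp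
    have "pick ?S (card {a\<in>?S. a < p}) = p" by (rule pick_card_in_set) simp
    then show ?thesis unfolding e .
  qed
  have p1: "pick ?S 1 = q"
  proof -
    have "{a\<in>?S. a < q} = {p}" using pq by auto
    then show ?thesis using pick_card_in_set[of q ?S] by simp
  qed
  have carr: "submatrix M ?S ?S \<in> carrier_mat 2 2"
    unfolding carrier_mat_def mem_Collect_eq dim_submatrix c by simp
  have si: "submatrix M ?S ?S $$ (a,b) = M $$ (pick ?S a, pick ?S b)" if "a < 2" "b < 2" for a b
    by (rule submatrix_index) (simp_all only: c that)
  have e00: "submatrix M ?S ?S $$ (0,0) = M$$(p,p)" using si[of 0 0] p0 by simp
  have e01: "submatrix M ?S ?S $$ (0,1) = M$$(p,q)" using si[of 0 1] p0 p1 by simp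
  have e10: "submatrix M ?S ?S $$ (1,0) = M$$(q,p)" using si[of 1 0] p0 p1 by simp
  have e11: "submatrix M ?S ?S $$ (1,1) = M$$(q,q)" using si[of 1 1] p1 by simp
  show ?thesis unfolding principal_minor_def det2[OF carr] e00 e01 e10 e11 by (rule refl)
qed


lemma sub3:
  assumes M: "(M::real mat) \<in> carrier_mat n n" and pq: "p < q" "q < r" "r < n"
  shows "principal_minor M {p,q,r} =
   M $$ (p,p) * (M $$ (q,q) * M $$ (r,r) - M $$ (q,r) * M $$ (r,q))
 - M $$ (p,q) * (M $$ (q,p) * M $$ (r,r) - M $$ (q,r) * M $$ (r,p))
 + M $$ (p,r) * (M $$ (q,p) * M $$ (r,q) - M $$ (q,q) * M $$ (r,p))"
proof -
  let ?S = "{p,q,r}"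
  have c: "card {x. x < dim_row M \<and> x \<in> ?S} = 3" "card {x. x < dim_col M \<and> x \<in> ?S} = 3"
  proof -
    have "{x. x < dim_row M \<and> x \<in> ?S} = ?S" "{x. x < dim_col M \<and> x \<in> ?S} = ?S" using M pq by auto
    moreover have "card ?S = 3" using pq by simp
    ultimately show "card {x. x < dim_row M \<and> x \<in> ?S} = 3" "card {x. x < dim_col M \<and> x \<in> ?S} = 3"
      by simp_all
  qed
  have p0: "pick ?S 0 = p"
  proof -
    have "{a\<in>?S. a < p} = {}" using pq by auto
    then have e: "card {a\<in>?S. a < p} = 0" by simp
    have "pick ?S (card {a\<in>?S. a < p}) = p" by (rule pick_card_in_set) simp
    then show ?thesis unfolding e .
  qed
  have p1: "pick ?S 1 = q"
  proof -
    have "{a\<in>?S. a < q} = {p}" using pq by auto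
    then show ?thesis using pick_card_in_set[of q ?S] by simp
  qed
  have p2: "pick ?S 2 = r"
  proof -
    have "{a\<in>?S. a < r} = {p,q}" using pq by auto
    then have "card {a\<in>?S. a < r} = 2" using pq by simp
    then show ?thesis using pick_card_in_set[of r ?S] by simp
  qed
  have carr: "submatrix M ?S ?S \<in> carrier_mat 3 3"
    unfolding carrier_mat_def mem_Collect_eq dim_submatrix c by simp
  have si: "submatrix M ?S ?S $$ (a,b) = M $$ (pick ?S a, pick ?S b)" if "a < 3" "b < 3" for a b
    by (rule submatrix_index) (simp_all only: c that)
  have P: "pick ?S 0 = p" "pick ?S 1 = q" "pick ?S 2 = r" by (fact p0, fact p1, fact p2)
  have e00: "submatrix M ?S ?S $$ (0,0) = M$$(p,p)" using si[of 0 0] P by simp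
  have e01: "submatrix M ?S ?S $$ (0,1) = M$$(p,q)" using si[of 0 1] P by simp
  have e02: "submatrix M ?S ?S $$ (0,2) = M$$(p,r)" using si[of 0 2] P by simp
  have e10: "submatrix M ?S ?S $$ (1,0) = M$$(q,p)" using si[of 1 0] P by simp
  have e11: "submatrix M ?S ?S $$ (1,1) = M$$(q,q)" using si[of 1 1] P by simp
  have e12: "submatrix M ?S ?S $$ (1,2) = M$$(q,r)" using si[of 1 2] P by simp
  have e20: "submatrix M ?S ?S $$ (2,0) = M$$(r,p)" using si[of 2 0] P by simp
  have e21: "submatrix M ?S ?S $$ (2,1) = M$$(r,q)" using si[of 2 1] P by simp
  have e22: "submatrix M ?S ?S $$ (2,2) = M$$(r,r)" using si[of 2 2] P by simp
  show ?thesis unfolding principal_minor_def det3[OF carr] e00 e01 e02 e10 e11 e12 e20 e21 e22 by (rule refl)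
qed

definition gg :: "real \<Rightarrow> real \<Rightarrow> real \<Rightarrow> real" where
 "gg x u v = x*v*(1-u) + u*(1-v)*(1-x)"

lemma alg:
  fixes x u v x' u' v' :: real
  assumes "x' = x \<or> x' = 1 - x" "u' = u \<or> u' = 1 - u" "v' = v \<or> v' = 1 - v"
   and "gg x u v = gg x' u' v'"
  shows "((x = 1 - x' \<and> x \<noteq> 1/2) \<and> (u = u' \<and> u \<noteq> 1/2) \<and> (v = v' \<and> v \<noteq> 1/2) \<longrightarrow>
            u = v \<and> v = u' \<and> u' = v')
       \<and> ((x = x' \<and> x \<noteq> 1/2) \<and> (u = 1 - u' \<and> u \<noteq> 1/2) \<and> (v = 1 - v' \<and> v \<noteq> 1/2) \<longrightarrow>
            u = v \<and> v = 1 - u' \<and> 1 - u' = 1 - v')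
       \<and> ((x = x' \<and> x \<noteq> 1/2) \<and> \<not> (u = u' \<and> u \<noteq> 1/2) \<and> \<not> (v = v' \<and> v \<noteq> 1/2) \<longrightarrow>
            (u = 1/2 \<longleftrightarrow> v = 1/2))
       \<and> ((x = 1 - x' \<and> x \<noteq> 1/2) \<and> \<not> (u = 1 - u' \<and> u \<noteq> 1/2) \<and> \<not> (v = 1 - v' \<and> v \<noteq> 1/2) \<longrightarrow>
            (u = 1/2 \<longleftrightarrow> v = 1/2))"
proof -
  have A: "gg (1-x) u v - gg x u v = (1-2*x)*(v-u)" by (simp add: gg_def algebra_simps)
  have B: "gg x (1-u) (1-v) - gg x u v = (1-2*x)*(v-u)" by (simp add: gg_def algebra_simps)
  have C: "x \<noteq> 1/2 \<Longrightarrow> (1-2*x) \<noteq> 0" by auto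
  have UA: "u = v" if "x' = 1 - x" "u' = u" "v' = v" "x \<noteq> 1/2"
  proof -
    have "(1-2*x)*(v-u) = 0" using A assms(4) that by simp
    then show ?thesis using C that by simp
  qed
  have UB: "u = v" if "x' = x" "u' = 1 - u" "v' = 1 - v" "x \<noteq> 1/2"
  proof -
    have "(1-2*x)*(v-u) = 0" using B assms(4) that by simp
    then show ?thesis using C that by simp
  qed
  have H1: "(x = 1 - x' \<and> x \<noteq> 1/2) \<and> (u = u' \<and> u \<noteq> 1/2) \<and> (v = v' \<and> v \<noteq> 1/2) \<longrightarrow> u = v \<and> v = u' \<and> u' = v'"
  proof
    assume h: "(x = 1 - x' \<and> x \<noteq> 1/2) \<and> (u = u' \<and> u \<noteq> 1/2) \<and> (v = v' \<and> v \<noteq> 1/2)"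
    then have "x' = 1 - x" "u' = u" "v' = v" "x \<noteq> 1/2" by auto
    then have "u = v" by (rule UA)
    then show "u = v \<and> v = u' \<and> u' = v'" using h by simp
  qed
  have H2: "(x = x' \<and> x \<noteq> 1/2) \<and> (u = 1 - u' \<and> u \<noteq> 1/2) \<and> (v = 1 - v' \<and> v \<noteq> 1/2) \<longrightarrow> u = v \<and> v = 1 - u' \<and> 1 - u' = 1 - v'"
  proof
    assume h: "(x = x' \<and> x \<noteq> 1/2) \<and> (u = 1 - u' \<and> u \<noteq> 1/2) \<and> (v = 1 - v' \<and> v \<noteq> 1/2)"
    then have "x' = x" "u' = 1 - u" "v' = 1 - v" "x \<noteq> 1/2" by auto
    then have "u = v" by (rule UB)
    then show "u = v \<and> v = 1 - u' \<and> 1 - u' = 1 - v'" using h by simp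
  qed
  have H3: "(x = x' \<and> x \<noteq> 1/2) \<and> \<not> (u = u' \<and> u \<noteq> 1/2) \<and> \<not> (v = v' \<and> v \<noteq> 1/2) \<longrightarrow> (u = 1/2 \<longleftrightarrow> v = 1/2)"
  proof
    assume h: "(x = x' \<and> x \<noteq> 1/2) \<and> \<not> (u = u' \<and> u \<noteq> 1/2) \<and> \<not> (v = v' \<and> v \<noteq> 1/2)"
    have "u' = 1 - u" using h assms(2) by auto
    moreover have "v' = 1 - v" using h assms(3) by auto
    ultimately have "u = v" using h UB by auto
    then show "(u = 1/2 \<longleftrightarrow> v = 1/2)" by simp
  qed
  have H4: "(x = 1 - x' \<and> x \<noteq> 1/2) \<and> \<not> (u = 1 - u' \<and> u \<noteq> 1/2) \<and> \<not> (v = 1 - v' \<and> v \<noteq> 1/2) \<longrightarrow> (u = 1/2 \<longleftrightarrow> v = 1/2)"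
  proof
    assume h: "(x = 1 - x' \<and> x \<noteq> 1/2) \<and> \<not> (u = 1 - u' \<and> u \<noteq> 1/2) \<and> \<not> (v = 1 - v' \<and> v \<noteq> 1/2)"
    have "u' = u" using h assms(2) by auto
    moreover have "v' = v" using h assms(3) by auto
    moreover have "x' = 1 - x" using h by auto
    ultimately have "u = v" using h UA by auto
    then show "(u = 1/2 \<longleftrightarrow> v = 1/2)" by simp
  qed
  show ?thesis using H1 H2 H3 H4 by (intro conjI)
qed

definition g3 :: "real mat \<Rightarrow> nat \<Rightarrow> nat \<Rightarrow> nat \<Rightarrow> real" where
  "g3 M i j k = M$$(i,j)*M$$(j,k)*M$$(k,i) + M$$(i,k)*M$$(k,j)*M$$(j,i)"

lemma pm3:
  assumes M: "(M::real mat) \<in> carrier_mat n n" and d: "\<forall>t<n. M$$(t,t) = 0"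
    and "i<n" "j<n" "k<n" "i\<noteq>j" "i\<noteq>k" "j\<noteq>k"
  shows "principal_minor M {i,j,k} = g3 M i j k"
proof -
  have key: "principal_minor M {p,q,r} = g3 M p q r" if "p<q" "q<r" "r<n" for p q r
  proof -
    have "M$$(p,p) = 0" "M$$(q,q) = 0" "M$$(r,r) = 0" using d that by auto
    then show ?thesis using sub3[OF M that] by (simp add: g3_def mult_ac)
  qed
  consider "i<j" "j<k" | "i<k" "k<j" | "j<i" "i<k" | "j<k" "k<i" | "k<i" "i<j" | "k<j" "j<i"
    using assms by linarith
  then show ?thesis
  proof cases
    case 1 then show ?thesis using key assms by simp
  next
    case 2
    have se: "{i,j,k} = {i,k,j}" by auto
    have gs: "g3 M i k j = g3 M i j k" by (simp add: g3_def mult_ac add_ac)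
    have "principal_minor M {i,j,k} = principal_minor M {i,k,j}" by (simp only: se)
    also have "\<dots> = g3 M i k j" by (rule key) (use 2 assms in auto)
    finally show ?thesis using gs by simp
  next
    case 3
    have se: "{i,j,k} = {j,i,k}" by auto
    have gs: "g3 M j i k = g3 M i j k" by (simp add: g3_def mult_ac add_ac)
    have "principal_minor M {i,j,k} = principal_minor M {j,i,k}" by (simp only: se)
    also have "\<dots> = g3 M j i k" by (rule key) (use 3 assms in auto)
    finally show ?thesis using gs by simp
  next
    case 4
    have se: "{i,j,k} = {j,k,i}" by auto
    have gs: "g3 M j k i = g3 M i j k" by (simp add: g3_def mult_ac add_ac)
    have "principal_minor M {i,j,k} = principal_minor M {j,k,i}" by (simp only: se)
    also have "\<dots> = g3 M j k i" by (rule key) (use 4 assms in auto)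
    finally show ?thesis using gs by simp
  next
    case 5
    have se: "{i,j,k} = {k,i,j}" by auto
    have gs: "g3 M k i j = g3 M i j k" by (simp add: g3_def mult_ac add_ac)
    have "principal_minor M {i,j,k} = principal_minor M {k,i,j}" by (simp only: se)
    also have "\<dots> = g3 M k i j" by (rule key) (use 5 assms in auto)
    finally show ?thesis using gs by simp
  next
    case 6
    have se: "{i,j,k} = {k,j,i}" by auto
    have gs: "g3 M k j i = g3 M i j k" by (simp add: g3_def mult_ac add_ac)
    have "principal_minor M {i,j,k} = principal_minor M {k,j,i}" by (simp only: se)
    also have "\<dots> = g3 M k j i" by (rule key) (use 6 assms in auto)
    finally show ?thesis using gs by simp
  qed
qed

lemma pm2:
  assumes M: "(M::real mat) \<in> carrier_mat n n" and d: "\<forall>t<n. M$$(t,t) = 0"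
    and "i<n" "j<n" "i\<noteq>j"
  shows "principal_minor M {i,j} = - M$$(i,j)*M$$(j,i)"
proof (cases "i<j")
  case True then show ?thesis using sub2[OF M True] assms by simp
next
  case False then have ji: "j<i" using assms by simp
  show ?thesis using sub2[OF M ji assms(3)] assms by (simp add: insert_commute)
qed

lemma tour:
  assumes "gen_tournament n M"
  shows "M \<in> carrier_mat n n" "\<forall>t<n. M$$(t,t) = 0"
    "\<And>a b. a<n \<Longrightarrow> b<n \<Longrightarrow> a\<noteq>b \<Longrightarrow> M$$(b,a) = 1 - M$$(a,b)"
proof -
  show C: "M \<in> carrier_mat n n" using assms unfolding gen_tournament_def by auto
  have E: "M + transpose_mat M = mat n n (\<lambda>_. 1) - 1\<^sub>m n" using assms unfolding gen_tournament_def by auto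
  have e: "M$$(a,b) + M$$(b,a) = (if a = b then 0 else 1)" if "a<n" "b<n" for a b
  proof -
    have "(M + transpose_mat M) $$ (a,b) = (mat n n (\<lambda>_. 1) - 1\<^sub>m n) $$ (a,b)" using E by simp
    then show ?thesis using C that by auto
  qed
  show "\<forall>t<n. M$$(t,t) = 0" using e by fastforce
  show "\<And>a b. a<n \<Longrightarrow> b<n \<Longrightarrow> a\<noteq>b \<Longrightarrow> M$$(b,a) = 1 - M$$(a,b)"
    using e by fastforce
qed

lemma two_cases:
  fixes a b :: real assumes "- a * (1 - a) = - b * (1 - b)" shows "b = a \<or> b = 1 - a"
proof -
  have "(b - a) * (b - (1 - a)) = 0" using assms by (simp add: algebra_simps)
  then show ?thesis by simp
qed

theorem lemma4p2:
  fixes n :: nat and A B :: "real mat" and i j k :: nat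
  assumes "gen_tournament n A" and "gen_tournament n B"
    and "same_principal_minors n 2 A B" and "same_principal_minors n 3 A B"
    and "i < n" and "j < n" and "k < n"
    and "i \<noteq> j" and "i \<noteq> k" and "j \<noteq> k"
  shows "(P_neq A B i j \<and> P_eq A B i k \<and> P_eq A B j k \<longrightarrow>
            A $$ (i,k) = A $$ (j,k) \<and> A $$ (j,k) = B $$ (i,k) \<and> B $$ (i,k) = B $$ (j,k))
       \<and> (P_eq A B i j \<and> P_neq A B i k \<and> P_neq A B j k \<longrightarrow>
            A $$ (i,k) = A $$ (j,k) \<and> A $$ (j,k) = 1 - B $$ (i,k) \<and> 1 - B $$ (i,k) = 1 - B $$ (j,k))
       \<and> (P_eq A B i j \<and> \<not> P_eq A B i k \<and> \<not> P_eq A B j k \<longrightarrow>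
            (A $$ (i,k) = 1/2 \<longleftrightarrow> A $$ (j,k) = 1/2))
       \<and> (P_neq A B i j \<and> \<not> P_neq A B i k \<and> \<not> P_neq A B j k \<longrightarrow>
            (A $$ (i,k) = 1/2 \<longleftrightarrow> A $$ (j,k) = 1/2))"
proof -
  note tA = tour[OF assms(1)] and tB = tour[OF assms(2)]
  have s2: "principal_minor A {a,b} = principal_minor B {a,b}" if "a<n" "b<n" "a\<noteq>b" for a b
  proof -
    have "{a,b} \<subseteq> {0..<n}" "card {a,b} = 2" using that by auto
    then show ?thesis using assms(3) unfolding same_principal_minors_def by blast
  qed
  have s3: "principal_minor A {i,j,k} = principal_minor B {i,j,k}"
  proof -
    have "{i,j,k} \<subseteq> {0..<n}" "card {i,j,k} = 3" using assms(5-10) by auto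
    then show ?thesis using assms(4) unfolding same_principal_minors_def by blast
  qed
  have ab: "B$$(a,b) = A$$(a,b) \<or> B$$(a,b) = 1 - A$$(a,b)" if "a<n" "b<n" "a\<noteq>b" for a b
  proof -
    have "principal_minor A {a,b} = principal_minor B {a,b}" using s2 that by blast
    then have "- A$$(a,b) * (1 - A$$(a,b)) = - B$$(a,b) * (1 - B$$(a,b))"
      using pm2[OF tA(1) tA(2) that] pm2[OF tB(1) tB(2) that] tA(3)[OF that] tB(3)[OF that] by simp
    then show ?thesis by (rule two_cases)
  qed
  have gA: "g3 A i j k = gg (A$$(i,j)) (A$$(i,k)) (A$$(j,k))"
  proof -
    have e: "A$$(j,i) = 1 - A$$(i,j)" "A$$(k,i) = 1 - A$$(i,k)" "A$$(k,j) = 1 - A$$(j,k)"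
      using tA(3)[of i j] tA(3)[of i k] tA(3)[of j k] assms(5-10) by simp_all
    show ?thesis unfolding g3_def gg_def e by (simp add: algebra_simps)
  qed
  have gB: "g3 B i j k = gg (B$$(i,j)) (B$$(i,k)) (B$$(j,k))"
  proof -
    have e: "B$$(j,i) = 1 - B$$(i,j)" "B$$(k,i) = 1 - B$$(i,k)" "B$$(k,j) = 1 - B$$(j,k)"
      using tB(3)[of i j] tB(3)[of i k] tB(3)[of j k] assms(5-10) by simp_all
    show ?thesis unfolding g3_def gg_def e by (simp add: algebra_simps)
  qed
  have geq: "gg (A$$(i,j)) (A$$(i,k)) (A$$(j,k)) = gg (B$$(i,j)) (B$$(i,k)) (B$$(j,k))"
    using s3 pm3[OF tA(1) tA(2) assms(5-10)] pm3[OF tB(1) tB(2) assms(5-10)] gA gB by simp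
  have x: "B$$(i,j) = A$$(i,j) \<or> B$$(i,j) = 1 - A$$(i,j)" using ab assms(5-10) by blast
  have u: "B$$(i,k) = A$$(i,k) \<or> B$$(i,k) = 1 - A$$(i,k)" using ab assms(5-10) by blast
  have v: "B$$(j,k) = A$$(j,k) \<or> B$$(j,k) = 1 - A$$(j,k)" using ab assms(5-10) by blast
  show ?thesis unfolding P_eq_def P_neq_def by (rule alg[OF x u v geq])
qed

end
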